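(* Let $I,I',I'':B_0(\Sigma)\to\mathbb{R}$ be monotonic and constant-linear with $I'\le I''$ (pointwise on $B_0(\Sigma)$). Then the following are equivalent: (i) for all $\phi,\varphi\in B_0(\Sigma)$, if $I'(\phi)>I'(\varphi)$ and $I''(\phi)>I''(\varphi)$, then $I(\phi)>I(\varphi)$; (ii) there exists $\alpha\in[0,1]$ such that $I(\varphi)=\alpha I'(\varphi)+(1-\alpha)I''(\varphi)$ for all $\varphi\in B_0(\Sigma)$.
   Context: $(S,\Sigma)$ is a set with an algebra of subsets; $B_0(\Sigma)$ is the set of real-valued $\Sigma$-measurable simple functions on $S$. A functional $I:B_0(\Sigma)\to\mathbb{R}$ is constant-linear if $I(a\varphi+b)=aI(\varphi)+b$ for all $\varphi\in B_0(\Sigma)$, $a\ge 0$, $b\in\mathbb{R}$ (where $b$ denotes the constant function), and monotonic if $\varphi\ge\psi$ pointwise implies $I(\varphi)\ge I(\psi)$. *)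

theory Defs
  imports "HOL-Analysis.Analysis"
begin

text \<open>Real-valued Sigma-measurable simple functions on S, for an algebra Sigma of subsets of S.
  Functions are represented extensionally: they vanish outside S.\<close>
definition B0 :: "'a set \<Rightarrow> 'a set set \<Rightarrow> ('a \<Rightarrow> real) set" where
  "B0 S \<Sigma> = {f. finite (f ` S) \<and> (\<forall>c. {x\<in>S. f x = c} \<in> \<Sigma>) \<and> (\<forall>x. x \<notin> S \<longrightarrow> f x = 0)}"

definition constant_linear :: "'a set \<Rightarrow> 'a set set \<Rightarrow> (('a \<Rightarrow> real) \<Rightarrow> real) \<Rightarrow> bool" where
  "constant_linear S \<Sigma> I \<longleftrightarrow>
     (\<forall>\<phi>\<in>B0 S \<Sigma>. \<forall>a b. a \<ge> 0 \<longrightarrow>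
        I (\<lambda>x\<in>S. a * \<phi> x + b) = a * I \<phi> + b)"

definition monotonic :: "'a set \<Rightarrow> 'a set set \<Rightarrow> (('a \<Rightarrow> real) \<Rightarrow> real) \<Rightarrow> bool" where
  "monotonic S \<Sigma> I \<longleftrightarrow>
     (\<forall>\<phi>\<in>B0 S \<Sigma>. \<forall>\<psi>\<in>B0 S \<Sigma>. (\<forall>x\<in>S. \<phi> x \<ge> \<psi> x) \<longrightarrow> I \<phi> \<ge> I \<psi>)"

end

theory Submission
  imports Defs
begin

definition aff :: "'a set \<Rightarrow> real \<Rightarrow> real \<Rightarrow> ('a \<Rightarrow> real) \<Rightarrow> ('a \<Rightarrow> real)" where
  "aff S a b \<phi> = (\<lambda>x. if x \<in> S then a * \<phi> x + b else 0)"

lemma aff_B0: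
  assumes alg: "algebra S \<Sigma>" and phi: "\<phi> \<in> B0 S \<Sigma>"
  shows "aff S a b \<phi> \<in> B0 S \<Sigma>"
proof -
  have top: "S \<in> \<Sigma>" and emp: "{} \<in> \<Sigma>"
    using alg algebra.top algebra_iff_Un by blast+
  have fin: "finite (\<phi> ` S)" and lev: "\<And>c. {x\<in>S. \<phi> x = c} \<in> \<Sigma>"
    using phi by (auto simp: B0_def)
  have "aff S a b \<phi> ` S \<subseteq> (\<lambda>y. a * y + b) ` \<phi> ` S"
    by (auto simp: aff_def)
  hence f1: "finite (aff S a b \<phi> ` S)" using fin finite_subset by blast
  have f2: "{x\<in>S. aff S a b \<phi> x = c} \<in> \<Sigma>" for c
  proof (cases "a = 0")
    case True
    then show ?thesis
      by (cases "b = c") (auto simp: aff_def top emp)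
  next
    case False
    have "{x\<in>S. aff S a b \<phi> x = c} = {x\<in>S. \<phi> x = (c - b) / a}"
      using False by (auto simp: aff_def field_simps)
    then show ?thesis using lev by simp
  qed
  show ?thesis using f1 f2 by (auto simp: B0_def aff_def)
qed

lemma aff_I:
  assumes alg: "algebra S \<Sigma>" and cl: "constant_linear S \<Sigma> I"
    and phi: "\<phi> \<in> B0 S \<Sigma>" and a: "a \<ge> 0"
  shows "I (aff S a b \<phi>) = a * I \<phi> + b"
proof -
  have A: "aff S a b \<phi> \<in> B0 S \<Sigma>" using aff_B0[OF alg phi] .
  have "I (\<lambda>x\<in>S. 1 * aff S a b \<phi> x + 0) = 1 * I (aff S a b \<phi>) + 0"
    using cl A unfolding constant_linear_def by (meson zero_le_one)
  moreover have "(\<lambda>x\<in>S. 1 * aff S a b \<phi> x + 0) = (\<lambda>x\<in>S. a * \<phi> x + b)"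
    by (auto simp: aff_def)
  moreover have "I (\<lambda>x\<in>S. a * \<phi> x + b) = a * I \<phi> + b"
    using cl phi a unfolding constant_linear_def by blast
  ultimately show ?thesis by simp
qed

lemma zero_B0:
  assumes alg: "algebra S \<Sigma>" shows "(\<lambda>x. 0) \<in> B0 S \<Sigma>"
proof -
  have top: "S \<in> \<Sigma>" and emp: "{} \<in> \<Sigma>"
    using alg algebra.top algebra_iff_Un by blast+
  have "{x\<in>S. (0::real) = c} \<in> \<Sigma>" for c
    by (cases "c = 0") (auto simp: top emp)
  moreover have "finite ((\<lambda>x. 0::real) ` S)"
    by (metis finite.simps image_constant_conv)
  ultimately show ?thesis by (auto simp: B0_def)
qed

lemma const_I:
  assumes alg: "algebra S \<Sigma>" and cl: "constant_linear S \<Sigma> I"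
  shows "I (aff S 0 c (\<lambda>x. 0)) = c"
  using aff_I[OF alg cl zero_B0[OF alg], of 0 c] by simp

lemma mono_I:
  assumes "monotonic S \<Sigma> I" "\<phi> \<in> B0 S \<Sigma>" "\<psi> \<in> B0 S \<Sigma>" "\<And>x. x \<in> S \<Longrightarrow> \<phi> x \<ge> \<psi> x"
  shows "I \<phi> \<ge> I \<psi>"
  using assms unfolding monotonic_def by blast

theorem lemma7:
  fixes S :: "'a set" and \<Sigma> :: "'a set set"
    and I I' I'' :: "('a \<Rightarrow> real) \<Rightarrow> real"
  assumes "algebra S \<Sigma>"
    and "monotonic S \<Sigma> I" "constant_linear S \<Sigma> I"
    and "monotonic S \<Sigma> I'" "constant_linear S \<Sigma> I'"
    and "monotonic S \<Sigma> I''" "constant_linear S \<Sigma> I''"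
    and "\<forall>\<phi>\<in>B0 S \<Sigma>. I' \<phi> \<le> I'' \<phi>"
  shows "(\<forall>\<phi>\<in>B0 S \<Sigma>. \<forall>\<psi>\<in>B0 S \<Sigma>.
            I' \<phi> > I' \<psi> \<and> I'' \<phi> > I'' \<psi> \<longrightarrow> I \<phi> > I \<psi>)
         \<longleftrightarrow> (\<exists>\<alpha>\<in>{0..1}. \<forall>\<phi>\<in>B0 S \<Sigma>. I \<phi> = \<alpha> * I' \<phi> + (1 - \<alpha>) * I'' \<phi>)"
proof
  assume P: "\<forall>\<phi>\<in>B0 S \<Sigma>. \<forall>\<psi>\<in>B0 S \<Sigma>.
            I' \<phi> > I' \<psi> \<and> I'' \<phi> > I'' \<psi> \<longrightarrow> I \<phi> > I \<psi>"
  note alg = assms(1)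
  define K where "K c = aff S 0 c (\<lambda>x. 0)" for c
  have KB: "K c \<in> B0 S \<Sigma>" for c unfolding K_def using aff_B0[OF alg zero_B0[OF alg]] .
  have KI: "I (K c) = c" "I' (K c) = c" "I'' (K c) = c" for c
    unfolding K_def using const_I[OF alg] assms by auto
  have low: "I' \<phi> \<le> I \<phi>" if ph: "\<phi> \<in> B0 S \<Sigma>" for \<phi>
  proof (rule ccontr)
    assume nt: "\<not> ?thesis"
    define c where "c = (I \<phi> + I' \<phi>) / 2"
    have le: "I' \<phi> \<le> I'' \<phi>" using assms(8) ph by blast
    have inst: "I' (K c) < I' \<phi> \<and> I'' (K c) < I'' \<phi> \<longrightarrow> I (K c) < I \<phi>"
      using P ph KB[of c] by blast
    have "I \<phi> > I (K c)"
      using inst le KI[of c] nt unfolding c_def by simp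
    then show False using KI[of c] nt unfolding c_def by simp
  qed
  have up: "I \<phi> \<le> I'' \<phi>" if ph: "\<phi> \<in> B0 S \<Sigma>" for \<phi>
  proof (rule ccontr)
    assume nt: "\<not> ?thesis"
    define c where "c = (I \<phi> + I'' \<phi>) / 2"
    have le: "I' \<phi> \<le> I'' \<phi>" using assms(8) ph by blast
    have inst: "I' \<phi> < I' (K c) \<and> I'' \<phi> < I'' (K c) \<longrightarrow> I \<phi> < I (K c)"
      using P ph KB[of c] by blast
    have "I (K c) > I \<phi>"
      using inst le KI[of c] nt unfolding c_def by simp
    then show False using KI[of c] nt unfolding c_def by simp
  qed
  have key: "I \<phi> \<le> I \<psi>" if ph: "\<phi> \<in> B0 S \<Sigma>" and ps: "\<psi> \<in> B0 S \<Sigma>"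
    and n: "I' \<phi> = 0" "I'' \<phi> = 1" "I' \<psi> = 0" "I'' \<psi> = 1" for \<phi> \<psi>
  proof (rule ccontr)
    assume nt: "\<not> ?thesis"
    define e where "e = (I \<phi> - I \<psi>) / 2"
    have e: "e > 0" using nt unfolding e_def by (simp add: field_simps)
    let ?f = "aff S 1 (- e) \<phi>"
    have fB: "?f \<in> B0 S \<Sigma>" using aff_B0[OF alg ph] .
    have "I' ?f = - e" "I'' ?f = 1 - e" "I ?f = I \<phi> - e"
      using aff_I[OF alg assms(5) ph, of 1 "-e"] aff_I[OF alg assms(7) ph, of 1 "-e"]
        aff_I[OF alg assms(3) ph, of 1 "-e"] n by auto
    moreover have "I' ?f < I' \<psi> \<and> I'' ?f < I'' \<psi> \<longrightarrow> I ?f < I \<psi>"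
      using P ps fB by blast
    ultimately have "I \<psi> > I ?f" using n e by simp
    then show False using \<open>I ?f = I \<phi> - e\<close> nt unfolding e_def by (simp add: field_simps)
  qed
  show "\<exists>\<alpha>\<in>{0..1}. \<forall>\<phi>\<in>B0 S \<Sigma>. I \<phi> = \<alpha> * I' \<phi> + (1 - \<alpha>) * I'' \<phi>"
  proof (cases "\<exists>\<phi>0\<in>B0 S \<Sigma>. I' \<phi>0 < I'' \<phi>0")
    case False
    then have "\<forall>\<phi>\<in>B0 S \<Sigma>. I \<phi> = 0 * I' \<phi> + (1 - 0) * I'' \<phi>"
      using low up assms(8) by force
    then show ?thesis by force
  next
    case True
    define nrm where "nrm \<phi> = aff S (1 / (I'' \<phi> - I' \<phi>)) (- I' \<phi> / (I'' \<phi> - I' \<phi>)) \<phi>" for \<phi>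
    have nB: "nrm \<phi> \<in> B0 S \<Sigma>" if "\<phi> \<in> B0 S \<Sigma>" for \<phi>
      unfolding nrm_def using aff_B0[OF alg that] .
    have nI: "I' (nrm \<phi>) = 0" "I'' (nrm \<phi>) = 1"
      "I (nrm \<phi>) = (I \<phi> - I' \<phi>) / (I'' \<phi> - I' \<phi>)"
      if "\<phi> \<in> B0 S \<Sigma>" "I' \<phi> < I'' \<phi>" for \<phi>
    proof -
      have d: "1 / (I'' \<phi> - I' \<phi>) \<ge> 0" using that by simp
      have dn: "I'' \<phi> - I' \<phi> \<noteq> 0" using that by simp
      show "I' (nrm \<phi>) = 0" unfolding nrm_def aff_I[OF alg assms(5) that(1) d]
        using dn by (simp add: field_simps)
      show "I'' (nrm \<phi>) = 1" unfolding nrm_def aff_I[OF alg assms(7) that(1) d]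
        using dn by (simp add: add_divide_distrib[symmetric] diff_divide_distrib[symmetric])
      show "I (nrm \<phi>) = (I \<phi> - I' \<phi>) / (I'' \<phi> - I' \<phi>)"
        unfolding nrm_def aff_I[OF alg assms(3) that(1) d]
        using dn by (simp add: add_divide_distrib[symmetric] diff_divide_distrib[symmetric])
    qed
    then obtain \<phi>0 where p0: "\<phi>0 \<in> B0 S \<Sigma>" "I' \<phi>0 < I'' \<phi>0" using True by blast
    define \<alpha> where "\<alpha> = 1 - I (nrm \<phi>0)"
    have a01: "\<alpha> \<in> {0..1}"
      using low[OF nB[OF p0(1)]] up[OF nB[OF p0(1)]] nI[OF p0] unfolding \<alpha>_def by simp
    have "I \<phi> = \<alpha> * I' \<phi> + (1 - \<alpha>) * I'' \<phi>" if ph: "\<phi> \<in> B0 S \<Sigma>" for \<phi>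
    proof (cases "I' \<phi> < I'' \<phi>")
      case False
      then have "I' \<phi> = I'' \<phi>" using assms(8) ph by force
      then have "I \<phi> = I' \<phi>" using low[OF ph] up[OF ph] by simp
      then show ?thesis using \<open>I' \<phi> = I'' \<phi>\<close> by (simp add: algebra_simps)
    next
      case True
      have "I (nrm \<phi>) = I (nrm \<phi>0)"
        using key[OF nB[OF ph] nB[OF p0(1)]] key[OF nB[OF p0(1)] nB[OF ph]]
          nI[OF ph True] nI[OF p0] by force
      hence "(I \<phi> - I' \<phi>) / (I'' \<phi> - I' \<phi>) = 1 - \<alpha>"
        using nI[OF ph True] unfolding \<alpha>_def by simp
      then show ?thesis using True by (simp add: field_simps)
    qed
    then show ?thesis using a01 by blast
  qed
next
  assume "\<exists>\<alpha>\<in>{0..1}. \<forall>\<phi>\<in>B0 S \<Sigma>. I \<phi> = \<alpha> * I' \<phi> + (1 - \<alpha>) * I'' \<phi>"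
  then obtain \<alpha> where a: "0 \<le> \<alpha>" "\<alpha> \<le> 1"
    and h: "\<forall>\<phi>\<in>B0 S \<Sigma>. I \<phi> = \<alpha> * I' \<phi> + (1 - \<alpha>) * I'' \<phi>" by auto
  show "\<forall>\<phi>\<in>B0 S \<Sigma>. \<forall>\<psi>\<in>B0 S \<Sigma>.
            I' \<phi> > I' \<psi> \<and> I'' \<phi> > I'' \<psi> \<longrightarrow> I \<phi> > I \<psi>"
  proof (intro ballI impI)
    fix \<phi> \<psi> assume ph: "\<phi> \<in> B0 S \<Sigma>" and ps: "\<psi> \<in> B0 S \<Sigma>"
      and lt: "I' \<phi> > I' \<psi> \<and> I'' \<phi> > I'' \<psi>"
    have "\<alpha> * I' \<psi> \<le> \<alpha> * I' \<phi>" using a lt by (simp add: mult_left_mono)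
    moreover have "(1 - \<alpha>) * I'' \<psi> \<le> (1 - \<alpha>) * I'' \<phi>" using a lt by (simp add: mult_left_mono)
    moreover have "\<alpha> * I' \<psi> < \<alpha> * I' \<phi> \<or> (1 - \<alpha>) * I'' \<psi> < (1 - \<alpha>) * I'' \<phi>"
      using a lt by (cases "\<alpha> = 0") auto
    ultimately show "I \<phi> > I \<psi>" using h ph ps by auto
  qed
qed

end
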